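(* For any $n\ge2$ and $D\subseteq[n-1]$, \[ \widetilde{Q}_{n,D}(1,q,q^2,\dots;t,tq,tq^2,\dots)=\frac{1}{(q;q)_n}\sum_{S\subseteq[n]}q^{\operatorname{comaj}(D,S)}t^{|S|}, \] i.e. the specialization $x_i=q^{i-1}$, $y_i=tq^{i-1}$ of $\widetilde{Q}_{n,D}(\mathbf{x};\mathbf{y})$ is as shown, where $(q;q)_n=(1-q)(1-q^2)\cdots(1-q^n)$.
   Context: Let $\mathcal{A}_+=\{1,2,\dots\}$, $\mathcal{A}_-=\{\bar1,\bar2,\dots\}$, and $\mathcal{A}=\mathcal{A}_+\sqcup\mathcal{A}_-$ totally ordered as $1<\bar1<2<\bar2<\cdots$. Set $z_a=x_a$ for $a\in\mathcal{A}_+$ and $z_{\bar b}=y_b$. The super quasisymmetric function is \[ \widetilde{Q}_{n,D}(\mathbf{x};\mathbf{y})=\sum z_{a_1}z_{a_2}\cdots z_{a_n}, \] summed over weakly increasing sequences $a_1\le\cdots\le a_n$ in $\mathcal{A}$ such that $a_i=a_{i+1}\in\mathcal{A}_+$ implies $i\notin D$ and $a_i=a_{i+1}\in\mathcal{A}_-$ implies $i\in D$. For $D\subseteq[n-1]$, $S\subseteq[n]$, the relative comajor index is $\operatorname{comaj}(D,S)=\sum (n-i)$ over all $1\le i\le n-1$ such that either ($i\in D$ and $i+1\notin S$) or ($i\notin D$ and $i\in S$). *)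

theory Defs
  imports "HOL-Analysis.Analysis"
begin

text \<open>The alphabet: Pos i is the letter i of A_+, Neg i is the barred letter of A_-
  (only indices i \<ge> 1 are letters). The total order 1 < 1bar < 2 < 2bar < ...
  is given via the rank function.\<close>
datatype letter = Pos nat | Neg nat

fun letter_idx :: "letter \<Rightarrow> nat" where
  "letter_idx (Pos i) = i" | "letter_idx (Neg i) = i"

fun letter_rank :: "letter \<Rightarrow> nat" where
  "letter_rank (Pos i) = 2 * i" | "letter_rank (Neg i) = 2 * i + 1"

definition letter_le :: "letter \<Rightarrow> letter \<Rightarrow> bool" where
  "letter_le a b \<longleftrightarrow> letter_rank a \<le> letter_rank b"

fun is_pos :: "letter \<Rightarrow> bool" where
  "is_pos (Pos _) = True" | "is_pos (Neg _) = False"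

definition alphabet :: "letter set" where
  "alphabet = {a. letter_idx a \<ge> 1}"

text \<open>Sequences a_1 ... a_n are lists of length n, with a_i = as ! (i - 1).
  The index set of the super quasisymmetric function Q~_{n,D}.\<close>
definition super_seqs :: "nat \<Rightarrow> nat set \<Rightarrow> letter list set" where
  "super_seqs n D = {as. length as = n \<and> set as \<subseteq> alphabet \<and>
     (\<forall>i\<in>{1..n-1}. letter_le (as ! (i - 1)) (as ! i)) \<and>
     (\<forall>i\<in>{1..n-1}. as ! (i - 1) = as ! i \<and> is_pos (as ! i) \<longrightarrow> i \<notin> D) \<and>
     (\<forall>i\<in>{1..n-1}. as ! (i - 1) = as ! i \<and> \<not> is_pos (as ! i) \<longrightarrow> i \<in> D)}"

fun z_spec :: "complex \<Rightarrow> complex \<Rightarrow> letter \<Rightarrow> complex" where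
  "z_spec q t (Pos i) = q ^ (i - 1)"
| "z_spec q t (Neg i) = t * q ^ (i - 1)"

definition monomial_spec :: "complex \<Rightarrow> complex \<Rightarrow> letter list \<Rightarrow> complex" where
  "monomial_spec q t as = (\<Prod>a\<leftarrow>as. z_spec q t a)"

definition comaj :: "nat \<Rightarrow> nat set \<Rightarrow> nat set \<Rightarrow> nat" where
  "comaj n D S = (\<Sum>i\<in>{i\<in>{1..n-1}. (i \<in> D \<and> i + 1 \<notin> S) \<or> (i \<notin> D \<and> i \<in> S)}. n - i)"

definition qpoch :: "complex \<Rightarrow> nat \<Rightarrow> complex" where
  "qpoch q n = (\<Prod>k=1..n. 1 - q ^ k)"

end

theory Submission
  imports Defs
begin

definition dl :: "nat set \<Rightarrow> nat \<Rightarrow> bool \<Rightarrow> bool \<Rightarrow> nat" where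
  "dl D i sa sb = (if (i \<in> D \<and> \<not> sb) \<or> (i \<notin> D \<and> sa) then 1 else 0)"

definition dlt :: "nat set \<Rightarrow> nat set \<Rightarrow> nat \<Rightarrow> nat" where
  "dlt D S k = dl D (Suc k) (Suc k \<in> S) (Suc (Suc k) \<in> S)"

definition mm :: "nat set \<Rightarrow> nat set \<Rightarrow> (nat \<Rightarrow> nat) \<Rightarrow> nat \<Rightarrow> nat" where
  "mm D S c k = 1 + (\<Sum>j\<le>k. c j) + (\<Sum>j<k. dlt D S j)"

definition mkl :: "bool \<Rightarrow> nat \<Rightarrow> letter" where
  "mkl s i = (if s then Neg i else Pos i)"

definition sq :: "nat \<Rightarrow> nat set \<Rightarrow> nat set \<Rightarrow> (nat \<Rightarrow> nat) \<Rightarrow> letter list" where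
  "sq n D S c = map (\<lambda>k. mkl (Suc k \<in> S) (mm D S c k)) [0..<n]"

definition sgs :: "nat \<Rightarrow> letter list \<Rightarrow> nat set" where
  "sgs n as = {i\<in>{1..n}. \<not> is_pos (as ! (i - 1))}"

definition iv :: "nat \<Rightarrow> nat set \<Rightarrow> letter list \<Rightarrow> nat \<Rightarrow> nat" where
  "iv n D as = (\<lambda>k. if k < n then letter_idx (as ! k) -
      (if k = 0 then 1 else letter_idx (as ! (k - 1)) + dlt D (sgs n as) (k - 1)) else undefined)"

lemma mm_0: "mm D S c 0 = 1 + c 0"
  by (simp add: mm_def)

lemma mm_Suc: "mm D S c (Suc k) = mm D S c k + dlt D S k + c (Suc k)"
  by (simp add: mm_def)

lemma mkl_idx[simp]: "letter_idx (mkl s i) = i" and mkl_pos[simp]: "is_pos (mkl s i) = (\<not> s)"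
  by (auto simp: mkl_def)

lemma mkl_inv: "mkl (\<not> is_pos a) (letter_idx a) = a"
  by (cases a) (auto simp: mkl_def)

lemma local_ok:
  "(letter_le a b \<and> (a = b \<and> is_pos b \<longrightarrow> i \<notin> D) \<and> (a = b \<and> \<not> is_pos b \<longrightarrow> i \<in> D))
   \<longleftrightarrow> letter_idx a + dl D i (\<not> is_pos a) (\<not> is_pos b) \<le> letter_idx b"
  by (cases a; cases b) (auto simp: letter_le_def dl_def)

lemma mm_ge1: "mm D S c k \<ge> 1"
  by (simp add: mm_def)

lemma sq_len[simp]: "length (sq n D S c) = n"
  by (simp add: sq_def)

lemma sq_nth: "k < n \<Longrightarrow> sq n D S c ! k = mkl (Suc k \<in> S) (mm D S c k)"
  by (simp add: sq_def)

lemma sgs_sq: "S \<subseteq> {1..n} \<Longrightarrow> sgs n (sq n D S c) = S"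
proof -
  assume S: "S \<subseteq> {1..n}"
  have "i \<in> sgs n (sq n D S c) \<longleftrightarrow> i \<in> S" for i
  proof (cases "i \<in> {1..n}")
    case True
    then have "i - 1 < n" "Suc (i - 1) = i" by auto
    then show ?thesis using True by (simp add: sgs_def sq_nth)
  next
    case False
    then show ?thesis using S by (auto simp: sgs_def)
  qed
  then show ?thesis by blast
qed

lemma sq_in: "sq n D S c \<in> super_seqs n D"
proof -
  let ?a = "sq n D S c"
  have al: "set ?a \<subseteq> alphabet"
    using mm_ge1 by (auto simp: sq_def alphabet_def)
  have loc: "letter_le (?a ! (i - 1)) (?a ! i) \<and> (?a ! (i - 1) = ?a ! i \<and> is_pos (?a ! i) \<longrightarrow> i \<notin> D)
     \<and> (?a ! (i - 1) = ?a ! i \<and> \<not> is_pos (?a ! i) \<longrightarrow> i \<in> D)" if i: "i \<in> {1..n-1}" for i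
  proof -
    obtain k where k: "i = Suc k" "Suc k < n" using i by (cases i) auto
    have e1: "?a ! (i - 1) = mkl (Suc k \<in> S) (mm D S c k)" using k by (simp add: sq_nth)
    have e2: "?a ! i = mkl (Suc (Suc k) \<in> S) (mm D S c (Suc k))" using k by (simp add: sq_nth)
    show ?thesis
      unfolding local_ok e1 e2 using k by (simp add: mm_Suc dlt_def)
  qed
  show ?thesis unfolding super_seqs_def mem_Collect_eq
  proof (intro conjI ballI)
    fix i assume "i \<in> {1..n-1}"
    note L = loc[OF this]
    show "letter_le (?a ! (i - 1)) (?a ! i)" using L by blast
    show "?a ! (i - 1) = ?a ! i \<and> is_pos (?a ! i) \<longrightarrow> i \<notin> D" using L by blast
    show "?a ! (i - 1) = ?a ! i \<and> \<not> is_pos (?a ! i) \<longrightarrow> i \<in> D" using L by blast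
  qed (use al in auto)
qed

lemma super_le: assumes "as \<in> super_seqs n D" "Suc k < n"
  shows "letter_idx (as ! k) + dlt D (sgs n as) k \<le> letter_idx (as ! Suc k)"
proof -
  have "Suc k \<in> {1..n-1}" using assms by auto
  moreover have H: "(\<forall>i\<in>{1..n-1}. letter_le (as ! (i - 1)) (as ! i))"
     "(\<forall>i\<in>{1..n-1}. as ! (i - 1) = as ! i \<and> is_pos (as ! i) \<longrightarrow> i \<notin> D)"
     "(\<forall>i\<in>{1..n-1}. as ! (i - 1) = as ! i \<and> \<not> is_pos (as ! i) \<longrightarrow> i \<in> D)"
    using assms(1) unfolding super_seqs_def mem_Collect_eq by blast+
  ultimately have "letter_le (as ! k) (as ! Suc k) \<and> (as ! k = as ! Suc k \<and> is_pos (as ! Suc k) \<longrightarrow> Suc k \<notin> D)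
     \<and> (as ! k = as ! Suc k \<and> \<not> is_pos (as ! Suc k) \<longrightarrow> Suc k \<in> D)"
    using bspec[OF H(1), of "Suc k"] bspec[OF H(2), of "Suc k"] bspec[OF H(3), of "Suc k"] by simp
  then have "letter_idx (as ! k) + dl D (Suc k) (\<not> is_pos (as ! k)) (\<not> is_pos (as ! Suc k)) \<le> letter_idx (as ! Suc k)"
    unfolding local_ok .
  moreover have "Suc k \<in> sgs n as \<longleftrightarrow> \<not> is_pos (as ! k)" "Suc (Suc k) \<in> sgs n as \<longleftrightarrow> \<not> is_pos (as ! Suc k)"
    using assms(2) by (auto simp: sgs_def)
  ultimately show ?thesis by (simp add: dlt_def)
qed

lemma super_idx1: assumes "as \<in> super_seqs n D" "k < n" shows "letter_idx (as ! k) \<ge> 1"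
  using assms unfolding super_seqs_def alphabet_def by (auto dest!: nth_mem)

lemma mm_iv: assumes "as \<in> super_seqs n D" "k < n"
  shows "mm D (sgs n as) (iv n D as) k = letter_idx (as ! k)"
  using assms(2)
proof (induction k)
  case 0
  then show ?case using super_idx1[OF assms(1) 0] by (simp add: mm_0 iv_def)
next
  case (Suc k)
  then show ?case using super_le[OF assms(1) Suc(2)] by (simp add: mm_Suc iv_def)
qed

lemma sq_iv: assumes "as \<in> super_seqs n D"
  shows "sq n D (sgs n as) (iv n D as) = as"
proof (rule nth_equalityI)
  show "length (sq n D (sgs n as) (iv n D as)) = length as" using assms by (simp add: super_seqs_def)
next
  fix k assume "k < length (sq n D (sgs n as) (iv n D as))"
  then have k: "k < n" by simp
  have "Suc k \<in> sgs n as \<longleftrightarrow> \<not> is_pos (as ! k)" using k by (auto simp: sgs_def)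
  then show "sq n D (sgs n as) (iv n D as) ! k = as ! k"
    using k by (simp add: sq_nth mm_iv[OF assms k] mkl_inv)
qed

lemma iv_sq: assumes "S \<subseteq> {1..n}" "c \<in> PiE {..<n} (\<lambda>_. UNIV)"
  shows "iv n D (sq n D S c) = c"
proof
  fix k
  show "iv n D (sq n D S c) k = c k"
  proof (cases "k < n")
    case True
    then show ?thesis
    proof (cases k)
      case 0 then show ?thesis using True by (simp add: iv_def sq_nth mm_0)
    next
      case (Suc j) then show ?thesis using True
        by (simp add: iv_def sq_nth mm_Suc sgs_sq[OF assms(1)])
    qed
  next
    case False
    then show ?thesis using assms(2) by (auto simp: iv_def PiE_def extensional_def)
  qed
qed

lemma iv_in: "iv n D as \<in> PiE {..<n} (\<lambda>_. UNIV)"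
  by (auto simp: iv_def PiE_def extensional_def)


lemma prod_list_upt0: "prod_list (map g [0..<n]) = (\<Prod>k<n. g k)"
  by (induction n) (auto simp: lessThan_Suc mult.commute)

lemma z_mkl: "z_spec q t (mkl s i) = (if s then t else 1) * q ^ (i - 1)"
  by (simp add: mkl_def)

lemma sumA: "(\<Sum>k<n. \<Sum>j\<le>k. f j) = (\<Sum>j<n. (n - j) * (f j :: nat))"
proof (induction n)
  case 0 then show ?case by simp
next
  case (Suc n)
  have "(\<Sum>j<Suc n. (Suc n - j) * f j) = (\<Sum>j<Suc n. (n - j) * f j + f j)"
    by (intro sum.cong) (auto simp: Suc_diff_le)
  also have "\<dots> = (\<Sum>j<n. (n - j) * f j) + (\<Sum>j\<le>n. f j)"
    by (simp add: sum.distrib lessThan_Suc_atMost[symmetric] lessThan_Suc)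
  finally show ?case using Suc by simp
qed

lemma sumB: "(\<Sum>k<n. \<Sum>j<k. f j) = (\<Sum>j<n. (n - 1 - j) * (f j :: nat))"
proof (induction n)
  case 0 then show ?case by simp
next
  case (Suc n)
  have "(\<Sum>j<Suc n. (Suc n - 1 - j) * f j) = (\<Sum>j<n. (n - 1 - j) * f j + f j)"
  proof -
    have "(Suc n - 1 - j) * f j = (n - 1 - j) * f j + f j" if "j < n" for j
    proof -
      have "Suc n - 1 - j = Suc (n - 1 - j)" using that by simp
      then show ?thesis by simp
    qed
    then show ?thesis by (simp add: lessThan_Suc)
  qed
  also have "\<dots> = (\<Sum>j<n. (n - 1 - j) * f j) + (\<Sum>j<n. f j)"
    by (simp add: sum.distrib)
  finally show ?case using Suc by simp
qed

lemma comaj_alt: "comaj n D S = (\<Sum>j<n. (n - 1 - j) * dlt D S j)"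
proof -
  have "comaj n D S = (\<Sum>i\<in>{1..n-1}. if (i \<in> D \<and> i + 1 \<notin> S) \<or> (i \<notin> D \<and> i \<in> S) then n - i else 0)"
    unfolding comaj_def by (rule sum.inter_filter) simp
  also have "{1..n-1} = Suc ` {..<n-1}"
    by (simp add: image_Suc_lessThan)
  also have "(\<Sum>i\<in>Suc ` {..<n-1}. if (i \<in> D \<and> i + 1 \<notin> S) \<or> (i \<notin> D \<and> i \<in> S) then n - i else 0)
     = (\<Sum>j<n-1. (n - 1 - j) * dlt D S j)"
    by (subst sum.reindex) (auto simp: dlt_def dl_def intro!: sum.cong)
  also have "\<dots> = (\<Sum>j<n. (n - 1 - j) * dlt D S j)"
  proof (cases n)
    case (Suc m) then show ?thesis by (simp add: lessThan_Suc)
  qed simp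
  finally show ?thesis .
qed

lemma card_shift: "S \<subseteq> {1..n} \<Longrightarrow> card {k \<in> {..<n}. Suc k \<in> S} = card S"
proof -
  assume S: "S \<subseteq> {1..n}"
  have "S = Suc ` {k \<in> {..<n}. Suc k \<in> S}"
  proof
    show "S \<subseteq> Suc ` {k \<in> {..<n}. Suc k \<in> S}"
    proof
      fix x assume x: "x \<in> S"
      then have "x = Suc (x - 1)" "x - 1 < n" using S by force+
      then show "x \<in> Suc ` {k \<in> {..<n}. Suc k \<in> S}" using x by (metis (mono_tags, lifting) imageI lessThan_iff mem_Collect_eq)
    qed
  qed auto
  then show ?thesis by (metis card_image inj_Suc inj_on_subset subset_UNIV)
qed

lemma mono_sq: assumes S: "S \<subseteq> {1..n}"
  shows "monomial_spec q t (sq n D S c) =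
     t ^ card S * q ^ comaj n D S * (\<Prod>j<n. (q ^ (n - j)) ^ c j)"
proof -
  have "monomial_spec q t (sq n D S c) = (\<Prod>k<n. (if Suc k \<in> S then t else 1) * q ^ (mm D S c k - 1))"
    by (simp add: monomial_spec_def sq_def prod_list_upt0 z_mkl o_def)
  also have "\<dots> = (\<Prod>k<n. (if Suc k \<in> S then t else 1)) * q ^ (\<Sum>k<n. mm D S c k - 1)"
    by (simp add: prod.distrib power_sum)
  also have "(\<Prod>k<n. (if Suc k \<in> S then t else 1)) = t ^ card S"
  proof -
    have "{..<n} \<inter> {k. Suc k \<in> S} = {k \<in> {..<n}. Suc k \<in> S}" by blast
    have c: "card {k. k < n \<and> Suc k \<in> S} = card S" using card_shift[OF S] by simp
    have "{..<n} \<inter> {k. Suc k \<in> S} = {k. k < n \<and> Suc k \<in> S}" by blast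
    then show ?thesis by (simp only: prod.If_cases prod.neutral_const prod_constant c finite_lessThan finite_Int) simp
  qed
  also have "(\<Sum>k<n. mm D S c k - 1) = (\<Sum>j<n. (n - j) * c j) + comaj n D S"
    by (simp add: mm_def sum.distrib sumA sumB comaj_alt)
  also have "q ^ ((\<Sum>j<n. (n - j) * c j) + comaj n D S) = q ^ comaj n D S * (\<Prod>j<n. (q ^ (n - j)) ^ c j)"
    by (simp add: power_add power_sum power_mult)
  finally show ?thesis by (simp add: mult.assoc)
qed


lemma geo_has_sum:
  fixes z :: "'a :: {real_normed_field, banach}"
  assumes "norm z < 1"
  shows "((\<lambda>k. z ^ k) has_sum (1 / (1 - z))) UNIV"
proof (rule norm_summable_imp_has_sum)
  show "summable (\<lambda>k. norm (z ^ k))"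
    using assms by (simp add: norm_power summable_geometric)
  show "(\<lambda>k. z ^ k) sums (1 / (1 - z))"
    using geometric_sums[OF assms] by simp
qed

lemma prod_rev: "(\<Prod>j<(n::nat). g (n - j)) = (\<Prod>k\<in>{1..n}. (g k :: 'a :: comm_monoid_mult))"
  by (rule prod.reindex_bij_witness[of _ "\<lambda>k. n - k" "\<lambda>k. n - k"]) auto

lemma pie_sum:
  fixes q :: complex
  assumes q: "norm q < 1"
  shows "((\<lambda>c. \<Prod>j<n. (q ^ (n - j)) ^ c j) has_sum (1 / qpoch q n)) (PiE {..<n} (\<lambda>_. UNIV))"
proof -
  define f where "f j k = (q ^ (n - j)) ^ k" for j k
  have nq: "norm (q ^ (n - j)) < 1" if "j < n" for j
  proof -
    have "norm q ^ (n - j) < 1" using q that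
      by (simp add: power_less_one_iff)
    then show ?thesis by (simp add: norm_power)
  qed
  have gs: "(f j has_sum (1 / (1 - q ^ (n - j)))) UNIV" if "j < n" for j
    unfolding f_def using geo_has_sum[OF nq[OF that]] .
  have ab: "(\<lambda>k. norm (f j k)) summable_on UNIV" if "j < n" for j
  proof -
    have "norm (norm (q ^ (n - j))) < 1" using nq[OF that] by simp
    from geo_has_sum[OF this] have "(\<lambda>k. norm (q ^ (n - j)) ^ k) summable_on UNIV"
      by (auto simp: summable_on_def)
    then show ?thesis by (simp add: f_def norm_power)
  qed
  have ab2: "Infinite_Set_Sum.abs_summable_on (f j) UNIV" if "j < n" for j
    using ab[OF that] abs_summable_equivalent by blast
  have "Infinite_Set_Sum.abs_summable_on (\<lambda>g. \<Prod>j\<in>{..<n}. f j (g j)) (PiE {..<n} (\<lambda>_. UNIV))"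
    by (rule abs_summable_on_prod_PiE) (use ab2 in auto)
  then have "(\<lambda>g. norm (\<Prod>j\<in>{..<n}. f j (g j))) summable_on (PiE {..<n} (\<lambda>_. UNIV))"
    using abs_summable_equivalent[of "\<lambda>g. \<Prod>j\<in>{..<n}. f j (g j)" "PiE {..<n} (\<lambda>_. UNIV)"] by simp
  then have sm: "(\<lambda>g. \<Prod>j\<in>{..<n}. f j (g j)) summable_on (PiE {..<n} (\<lambda>_. UNIV))"
    by (rule abs_summable_summable)
  have "infsum (\<lambda>g. \<Prod>j\<in>{..<n}. f j (g j)) (PiE {..<n} (\<lambda>_. UNIV)) = (\<Prod>j\<in>{..<n}. infsum (f j) UNIV)"
    by (rule infsum_prod_PiE_abs) (use ab in auto)
  also have "\<dots> = (\<Prod>j<n. 1 / (1 - q ^ (n - j)))"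
    using gs by (intro prod.cong) (auto simp: infsumI)
  also have "\<dots> = (\<Prod>k\<in>{1..n}. 1 / (1 - q ^ k))"
    by (rule prod_rev)
  also have "\<dots> = 1 / qpoch q n"
    by (simp add: qpoch_def prod_dividef)
  finally show ?thesis using sm unfolding f_def
    by (metis (no_types, lifting) has_sum_infsum)
qed


lemma part_sum:
  fixes q t :: complex
  assumes q: "norm q < 1" and S: "S \<subseteq> {1..n}"
  shows "(monomial_spec q t has_sum (t ^ card S * q ^ comaj n D S * (1 / qpoch q n)))
           {as \<in> super_seqs n D. sgs n as = S}"
proof -
  have h: "((\<lambda>c. t ^ card S * q ^ comaj n D S * (\<Prod>j<n. (q ^ (n - j)) ^ c j)) has_sum
      (t ^ card S * q ^ comaj n D S * (1 / qpoch q n))) (PiE {..<n} (\<lambda>_. UNIV))"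
    by (rule has_sum_cmult_right[OF pie_sum[OF q]])
  have "((\<lambda>c. t ^ card S * q ^ comaj n D S * (\<Prod>j<n. (q ^ (n - j)) ^ c j)) has_sum
      (t ^ card S * q ^ comaj n D S * (1 / qpoch q n))) (PiE {..<n} (\<lambda>_. UNIV)) =
      (monomial_spec q t has_sum (t ^ card S * q ^ comaj n D S * (1 / qpoch q n)))
           {as \<in> super_seqs n D. sgs n as = S}"
  proof (rule has_sum_reindex_bij_witness[where i = "iv n D" and j = "sq n D S"])
    fix c :: "nat \<Rightarrow> nat" assume c: "c \<in> PiE {..<n} (\<lambda>_. UNIV)"
    show "iv n D (sq n D S c) = c" by (rule iv_sq[OF S c])
    show "sq n D S c \<in> {as \<in> super_seqs n D. sgs n as = S}" using sq_in sgs_sq[OF S] by blast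
    show "monomial_spec q t (sq n D S c) = t ^ card S * q ^ comaj n D S * (\<Prod>j<n. (q ^ (n - j)) ^ c j)"
      by (rule mono_sq[OF S])
  next
    fix as assume as: "as \<in> {as \<in> super_seqs n D. sgs n as = S}"
    then show "sq n D S (iv n D as) = as" using sq_iv by blast
    show "iv n D as \<in> PiE {..<n} (\<lambda>_. UNIV)" by (rule iv_in)
  qed simp
  with h show ?thesis by simp
qed

theorem proposition5p9:
  fixes n :: nat and D :: "nat set" and q t :: complex
  assumes "n \<ge> 2" and "D \<subseteq> {1..n-1}" and "norm q < 1"
  shows "(monomial_spec q t has_sum
           ((1 / qpoch q n) * (\<Sum>S\<in>Pow {1..n}. q ^ comaj n D S * t ^ card S)))
         (super_seqs n D)"
proof -
  have "(monomial_spec q t has_sum (\<Sum>S\<in>Pow {1..n}. t ^ card S * q ^ comaj n D S * (1 / qpoch q n)))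
          (\<Union>S\<in>Pow {1..n}. {as \<in> super_seqs n D. sgs n as = S})"
    by (rule sum_has_sum) (use part_sum[OF assms(3)] in auto)
  also have "(\<Union>S\<in>Pow {1..n}. {as \<in> super_seqs n D. sgs n as = S}) = super_seqs n D"
  proof (intro equalityI subsetI)
    fix as assume "as \<in> super_seqs n D"
    moreover have "sgs n as \<in> Pow {1..n}" unfolding sgs_def by blast
    ultimately show "as \<in> (\<Union>S\<in>Pow {1..n}. {as \<in> super_seqs n D. sgs n as = S})" by blast
  qed blast
  also have "(\<Sum>S\<in>Pow {1..n}. t ^ card S * q ^ comaj n D S * (1 / qpoch q n)) =
      (1 / qpoch q n) * (\<Sum>S\<in>Pow {1..n}. q ^ comaj n D S * t ^ card S)"
    unfolding sum_distrib_left
    by (intro sum.cong refl) (simp only: mult.commute mult.left_commute mult.assoc)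
  finally show ?thesis .
qed

end
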